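(* Let $J$ be a Jordan algebra with unit element $1$ over a field $F$ of characteristic $\neq 2,3$, and let $d$ be a derivation with invertible values of $J$. Let $I$ be a proper ideal of $J$ such that $I \not\subseteq \ker(d)$. Then: (a) $I$ is both a minimal and a maximal proper ideal of $J$, i.e. for all proper ideals $I_1, I_2$ of $J$ with $I_1 \subseteq I \subseteq I_2$ we have $I_2 = I$, and if $I_1 \neq 0$ then $I_1 = I$; (b) $I^3 = 0$, where $I^3 = I^2 I$.
   Context: A Jordan algebra is a commutative algebra satisfying $(x^2,y,x)=0$, where $(a,b,c)=(ab)c-a(bc)$. In a Jordan algebra $J$ with unit $1$, an element $x$ is invertible if there exists $y \in J$ with $xy = 1$ and $x^2 y = x$. A derivation with invertible values of $J$ is a nonzero derivation $d$ of $J$ such that for every $x \in J$, $d(x)$ is either invertible or equal to $0$. *)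

theory Defs
  imports Main "HOL.Vector_Spaces"
begin

definition assoc :: "('a::ab_group_add \<Rightarrow> 'a \<Rightarrow> 'a) \<Rightarrow> 'a \<Rightarrow> 'a \<Rightarrow> 'a \<Rightarrow> 'a" where
  "assoc m a b c = m (m a b) c - m a (m b c)"

definition jordan_algebra :: "('k::field \<Rightarrow> 'a::ab_group_add \<Rightarrow> 'a) \<Rightarrow> ('a \<Rightarrow> 'a \<Rightarrow> 'a) \<Rightarrow> bool" where
  "jordan_algebra sc m \<longleftrightarrow>
     Vector_Spaces.vector_space sc \<and>
     (\<forall>x y z. m (x + y) z = m x z + m y z) \<and>
     (\<forall>x y z. m x (y + z) = m x y + m x z) \<and>
     (\<forall>c x y. m (sc c x) y = sc c (m x y)) \<and>
     (\<forall>c x y. m x (sc c y) = sc c (m x y)) \<and>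
     (\<forall>x y. m x y = m y x) \<and>
     (\<forall>x y. assoc m (m x x) y x = 0)"

definition unit_elt :: "('a \<Rightarrow> 'a \<Rightarrow> 'a) \<Rightarrow> 'a \<Rightarrow> bool" where
  "unit_elt m e \<longleftrightarrow> (\<forall>x. m e x = x \<and> m x e = x)"

definition invertible_elt :: "('a \<Rightarrow> 'a \<Rightarrow> 'a) \<Rightarrow> 'a \<Rightarrow> 'a \<Rightarrow> bool" where
  "invertible_elt m e x \<longleftrightarrow> (\<exists>y. m x y = e \<and> m (m x x) y = x)"

definition derivation :: "('k::field \<Rightarrow> 'a::ab_group_add \<Rightarrow> 'a) \<Rightarrow> ('a \<Rightarrow> 'a \<Rightarrow> 'a) \<Rightarrow> ('a \<Rightarrow> 'a) \<Rightarrow> bool" where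
  "derivation sc m d \<longleftrightarrow> Vector_Spaces.linear sc sc d \<and> (\<forall>x y. d (m x y) = m (d x) y + m x (d y))"

definition derivation_inv_values ::
  "('k::field \<Rightarrow> 'a::ab_group_add \<Rightarrow> 'a) \<Rightarrow> ('a \<Rightarrow> 'a \<Rightarrow> 'a) \<Rightarrow> 'a \<Rightarrow> ('a \<Rightarrow> 'a) \<Rightarrow> bool" where
  "derivation_inv_values sc m e d \<longleftrightarrow>
     derivation sc m d \<and> (\<exists>x. d x \<noteq> 0) \<and> (\<forall>x. invertible_elt m e (d x) \<or> d x = 0)"

definition alg_ideal :: "('k::field \<Rightarrow> 'a::ab_group_add \<Rightarrow> 'a) \<Rightarrow> ('a \<Rightarrow> 'a \<Rightarrow> 'a) \<Rightarrow> 'a set \<Rightarrow> bool" where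
  "alg_ideal sc m I \<longleftrightarrow> module.subspace sc I \<and> (\<forall>x a. a \<in> I \<longrightarrow> m x a \<in> I \<and> m a x \<in> I)"

definition proper_ideal :: "('k::field \<Rightarrow> 'a::ab_group_add \<Rightarrow> 'a) \<Rightarrow> ('a \<Rightarrow> 'a \<Rightarrow> 'a) \<Rightarrow> 'a set \<Rightarrow> bool" where
  "proper_ideal sc m I \<longleftrightarrow> alg_ideal sc m I \<and> I \<noteq> UNIV"

definition set_prod :: "('k::field \<Rightarrow> 'a::ab_group_add \<Rightarrow> 'a) \<Rightarrow> ('a \<Rightarrow> 'a \<Rightarrow> 'a) \<Rightarrow> 'a set \<Rightarrow> 'a set \<Rightarrow> 'a set" where
  "set_prod sc m A B = module.span sc {m a b | a b. a \<in> A \<and> b \<in> B}"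

end

theory Submission
  imports Defs
begin

locale JJ =
  fixes sc :: "'k::field \<Rightarrow> 'a::ab_group_add \<Rightarrow> 'a" and m :: "'a \<Rightarrow> 'a \<Rightarrow> 'a"
  assumes J: "jordan_algebra sc m" and char2: "(2::'k) \<noteq> 0"
begin

lemma Jc: "vector_space sc \<and>
     (\<forall>x y z. m (x + y) z = m x z + m y z) \<and>
     (\<forall>x y z. m x (y + z) = m x y + m x z) \<and>
     (\<forall>c x y. m (sc c x) y = sc c (m x y)) \<and>
     (\<forall>c x y. m x (sc c y) = sc c (m x y)) \<and>
     (\<forall>x y. m x y = m y x) \<and>
     (\<forall>x y. assoc m (m x x) y x = 0)" using J unfolding jordan_algebra_def .
lemma VS: "module sc" using Jc module_iff_vector_space by blast
lemma addl: "m (x + y) z = m x z + m y z" using Jc by blast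
lemma addr: "m x (y + z) = m x y + m x z" using Jc by blast
lemma comm: "m x y = m y x" using Jc by blast
lemma jord: "m (m (m x x) y) x = m (m x x) (m y x)"
proof -
  have "assoc m (m x x) y x = 0" using Jc by blast
  thus ?thesis unfolding assoc_def by (rule right_minus_eq[THEN iffD1])
qed

lemma zl[simp]: "m 0 z = 0"
proof -
  have "m (0+0) z = m 0 z + m 0 z" by (rule addl)
  hence "m 0 z = m 0 z + m 0 z" by (simp only: add_0_left)
  thus ?thesis by (simp only: add_cancel_right_right)
qed
lemma zr[simp]: "m z 0 = 0" using comm[of z 0] by simp
lemma negl: "m (- x) z = - m x z"
proof -
  have "m x z + m (-x) z = 0" using addl[of x "-x" z] by simp
  thus ?thesis by (simp add: eq_neg_iff_add_eq_0 add.commute)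
qed
lemma negr: "m z (- x) = - m z x" using comm[of z "-x"] comm[of z x] negl[of x z] by simp
lemma diffl: "m (x - y) z = m x z - m y z" by (simp only: diff_conv_add_uminus addl negl)
lemma diffr: "m z (x - y) = m z x - m z y" by (simp only: diff_conv_add_uminus addr negr)

lemmas bil = addl addr negl negr diffl diffr

lemma half: assumes "x + x = (0::'a)" shows "x = 0"
proof -
  interpret module sc by (rule VS)
  have "sc 2 x = sc (1+1) x" by simp
  also have "\<dots> = x + x" by (simp only: scale_left_distrib scale_one)
  finally have "sc 2 x = 0" using assms by simp
  hence "sc (inverse 2) (sc 2 x) = 0" by simp
  thus ?thesis using char2 by simp
qed

lemma lin: "m (m (m z x) x) x + m (m (m z x) x) x + m (m (m x x) x) z
   = m (m x x) (m z x) + m (m x x) (m z x) + m (m x x) (m z x)"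
proof -
  define F where "F a b c = m (m (m a b) x) c - m (m a b) (m x c)" for a b c
  have f0: "F a a a = 0" for a unfolding F_def using jord[of a x] by simp
  have Fa1: "F (a+b) c w = F a c w + F b c w" for a b c w unfolding F_def by (simp add: bil)
  have Fa2: "F c (a+b) w = F c a w + F c b w" for a b c w unfolding F_def by (simp add: bil)
  have Fa3: "F c w (a+b) = F c w a + F c w b" for a b c w unfolding F_def by (simp add: bil)
  have Fn1: "F (-a) c w = - F a c w" for a c w unfolding F_def by (simp add: bil)
  have Fn2: "F c (-a) w = - F c a w" for a c w unfolding F_def by (simp add: bil)
  have Fn3: "F c w (-a) = - F c w a" for a c w unfolding F_def by (simp add: bil)
  define A where "A = F z x x + F x z x + F x x z"
  define B where "B = F z z x + F z x z + F x z z"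
  have e1: "F (x+z) (x+z) (x+z) = F x x x + A + B + F z z z"
    unfolding A_def B_def by (simp only: Fa1 Fa2 Fa3 add_ac)
  have e2: "F (x + -z) (x + -z) (x + -z) = F x x x - A + B - F z z z"
    unfolding A_def B_def by (simp only: Fa1 Fa2 Fa3 Fn1 Fn2 Fn3 minus_minus diff_conv_add_uminus minus_add_distrib add_ac)
  have "A + A = 0" using e1 e2 f0[of "x+z"] f0[of "x + -z"] f0[of x] f0[of z]
    by (simp add: algebra_simps)
  hence "A = 0" by (rule half)
  thus ?thesis unfolding A_def F_def
    by (simp add: comm[of x z] comm[of "m z x" "m x x"] algebra_simps)
qed
end

locale JJ2 = JJ +
  fixes e and d
  assumes unit: "unit_elt m e" and dinv: "derivation_inv_values sc m e d"
begin

lemma ul[simp]: "m e x = x" and ur[simp]: "m x e = x" using unit by (auto simp: unit_elt_def)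

lemma dadd: "d (x + y) = d x + d y" using dinv by (simp add: derivation_inv_values_def derivation_def linear_iff)
lemma d0[simp]: "d 0 = 0"
proof -
  have "d (0+0) = d 0 + d 0" by (rule dadd)
  hence "d 0 = d 0 + d 0" by (simp only: add_0_left)
  thus ?thesis by (simp only: add_cancel_right_right)
qed
lemma dneg: "d (- x) = - d x"
proof -
  have "d x + d (-x) = 0" using dadd[of x "-x"] by simp
  thus ?thesis by (simp add: eq_neg_iff_add_eq_0 add.commute)
qed
lemma dl: "d (m x y) = m (d x) y + m x (d y)" using dinv by (simp add: derivation_inv_values_def derivation_def)
lemma dinvv: "d x = 0 \<or> (\<exists>y. m (d x) y = e \<and> m (m (d x) (d x)) y = d x)"
  using dinv by (auto simp: derivation_inv_values_def invertible_elt_def)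

context fixes P assumes P: "proper_ideal sc m P"
begin
lemma Psub: "module.subspace sc P" using P by (simp add: proper_ideal_def alg_ideal_def)
lemma Padd: "x \<in> P \<Longrightarrow> y \<in> P \<Longrightarrow> x + y \<in> P" using module.subspace_add[OF VS Psub] .
lemma Pneg: "x \<in> P \<Longrightarrow> - x \<in> P" using module.subspace_neg[OF VS Psub] .
lemma P0: "0 \<in> P" using module.subspace_0[OF VS Psub] .
lemma Pml: "a \<in> P \<Longrightarrow> m a x \<in> P" using P by (simp add: proper_ideal_def alg_ideal_def)
lemma Pmr: "a \<in> P \<Longrightarrow> m x a \<in> P" using P by (simp add: proper_ideal_def alg_ideal_def)
lemma Pe: "e \<notin> P"
proof
  assume "e \<in> P"
  hence "m e x \<in> P" for x by (rule Pml)
  hence "P = UNIV" by auto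
  thus False using P by (simp add: proper_ideal_def)
qed
lemma F1: assumes "z \<in> P" "d z \<in> P" shows "d z = 0"
proof (rule ccontr)
  assume "d z \<noteq> 0"
  then obtain y where "m (d z) y = e" using dinvv by blast
  thus False using Pml[OF assms(2), of y] Pe by simp
qed
lemma decomp: assumes "x0 \<in> P" "d x0 \<noteq> 0" shows "\<exists>i x1. i \<in> P \<and> x1 \<in> P \<and> e = i + d x1"
proof -
  obtain y where y: "m (d x0) y = e" using dinvv assms(2) by blast
  have "d (m x0 y) = e + m x0 (d y)" using dl[of x0 y] y by simp
  hence "e = - m x0 (d y) + d (m x0 y)" by (simp add: algebra_simps)
  thus ?thesis using Pneg[OF Pml[OF assms(1)]] Pml[OF assms(1)] by blast
qed
lemma F2: assumes "k \<in> P" "d k = 0" shows "m k (d a) = 0"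
proof -
  have "d (m k a) = m k (d a)" using dl[of k a] assms(2) by simp
  hence "d (m k a) \<in> P" using Pml[OF assms(1)] by simp
  hence "d (m k a) = 0" using F1 Pml[OF assms(1)] by blast
  thus ?thesis using dl[of k a] assms(2) by simp
qed
lemma K0: assumes "x0 \<in> P" "d x0 \<noteq> 0" "z \<in> P" "d z = 0" shows "z = 0"
proof -
  obtain i x1 where ix: "i \<in> P" "x1 \<in> P" "e = i + d x1" using decomp assms(1,2) by blast
  define u where "u = d x1"
  have iu: "i = e - u" using ix(3) unfolding u_def by (simp add: algebra_simps)
  have "u \<noteq> 0" using ix Pe unfolding u_def by auto
  then obtain y where y1: "m u y = e" and y2: "m (m u u) y = u" using dinvv unfolding u_def by blast
  define f where "f = m i i"
  have fP: "f \<in> P" unfolding f_def using Pml ix(1) by blast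
  have "d f = m (d i) i + m i (d i)" unfolding f_def by (rule dl)
  hence "d f \<in> P" using Padd Pmr Pml ix(1) by simp
  hence df: "d f = 0" using F1 fP by blast
  have fu: "m f u = 0" unfolding u_def using F2[OF fP df] .
  have fe: "f = e - u - u + m u u" unfolding f_def iu by (simp add: bil comm[of e u] algebra_simps)
  have l: "m (m (m y u) u) u + m (m (m y u) u) u + m (m (m u u) u) y
     = m (m u u) (m y u) + m (m u u) (m y u) + m (m u u) (m y u)" by (rule lin)
  have yu: "m y u = e" using y1 comm by metis
  have u3: "m (m (m u u) u) y = m u u" using l unfolding yu by (simp add: algebra_simps)
  have "0 = m (m f u) y" using fu by simp
  also have "\<dots> = f" unfolding fe by (simp add: bil y1 y2 u3 comm[of u y] algebra_simps)
  finally have f0: "m i i = 0" unfolding f_def by simp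
  have nil: "m (m (m w i) i) i = 0" for w
  proof -
    have "m (m (m w i) i) i + m (m (m w i) i) i + m (m (m i i) i) w
     = m (m i i) (m w i) + m (m i i) (m w i) + m (m i i) (m w i)" by (rule lin)
    hence "m (m (m w i) i) i + m (m (m w i) i) i = 0" using f0 by simp
    thus ?thesis by (rule half)
  qed
  have "m z u = 0" unfolding u_def using F2[OF assms(3,4)] .
  hence "z = m z i" using ix(3) unfolding u_def[symmetric] by (metis ur addr add_0_right)
  hence "z = m (m (m z i) i) i" by simp
  thus ?thesis using nil by simp
qed
lemma MAX: assumes B: "proper_ideal sc m B" and AB: "P \<subseteq> B" and "x0 \<in> P" "d x0 \<noteq> 0"
  shows "B \<subseteq> P"
proof
  fix z assume z: "z \<in> B"
  obtain i x1 where ix: "i \<in> P" "x1 \<in> P" "e = i + d x1" using decomp assms(3,4) by blast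
  have "m x1 (d z) \<in> B" using AB Pml[OF ix(2)] by blast
  hence "d (m x1 z) \<in> B"
    using dl[of x1 z] JJ2.Padd[OF JJ2_axioms B] JJ2.Pmr[OF JJ2_axioms B z] by simp
  hence "d (m x1 z) = 0" using JJ2.F1[OF JJ2_axioms B] JJ2.Pml[OF JJ2_axioms B] AB ix(2) by blast
  hence "m (d x1) z = - m x1 (d z)" using dl[of x1 z] by (simp add: eq_neg_iff_add_eq_0)
  hence "m (d x1) z \<in> P" using Pneg Pml ix(2) by simp
  moreover have "z = m i z + m (d x1) z" using ix(3) by (metis ul addl)
  ultimately show "z \<in> P" using Padd Pml ix(1) by metis
qed
end
end
theorem lemma1:
  fixes sc :: "'k::field \<Rightarrow> 'a::ab_group_add \<Rightarrow> 'a"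
    and m :: "'a \<Rightarrow> 'a \<Rightarrow> 'a" and e :: 'a and d :: "'a \<Rightarrow> 'a" and I :: "'a set"
  assumes char2: "(2::'k) \<noteq> 0" and char3: "(3::'k) \<noteq> 0"
    and J: "jordan_algebra sc m"
    and unit: "unit_elt m e"
    and d: "derivation_inv_values sc m e d"
    and I: "proper_ideal sc m I"
    and notker: "\<not> I \<subseteq> {x. d x = 0}"
  shows "(\<forall>I1 I2. proper_ideal sc m I1 \<and> proper_ideal sc m I2 \<and> I1 \<subseteq> I \<and> I \<subseteq> I2 \<longrightarrow>
            I2 = I \<and> (I1 \<noteq> {0} \<longrightarrow> I1 = I))
         \<and> set_prod sc m (set_prod sc m I I) I = {0}"
proof -
  interpret JJ2 sc m e d using J char2 unit d by (unfold_locales) auto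
  obtain x0 where x0: "x0 \<in> I" "d x0 \<noteq> 0" using notker by auto
  have a: "I2 = I \<and> (I1 \<noteq> {0} \<longrightarrow> I1 = I)"
    if h: "proper_ideal sc m I1" "proper_ideal sc m I2" "I1 \<subseteq> I" "I \<subseteq> I2" for I1 I2
  proof
    show "I2 = I" using MAX[OF I h(2) h(4) x0] h(4) by (rule equalityI)
    show "I1 \<noteq> {0} \<longrightarrow> I1 = I"
    proof
      assume "I1 \<noteq> {0}"
      then obtain w where w: "w \<in> I1" "w \<noteq> 0" using P0[OF h(1)] by blast
      have "d w \<noteq> 0" using K0[OF I x0] w h(3) by blast
      thus "I1 = I" using h(3) MAX[OF h(1) I h(3) w(1)] by auto
    qed
  qed
  have z: "m a b = 0" if "a \<in> I" "b \<in> I" for a b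
  proof -
    have "d (m a b) \<in> I" using dl[of a b] Padd[OF I] Pml[OF I] Pmr[OF I] that by simp
    hence "d (m a b) = 0" using F1[OF I] Pml[OF I that(1)] by blast
    thus ?thesis using K0[OF I x0] Pml[OF I that(1)] by blast
  qed
  have s1: "{m a b | a b. a \<in> I \<and> b \<in> I} = {0}" using z P0[OF I] zl by (auto intro!: exI[of _ 0])
  have s2: "set_prod sc m I I = {0}" unfolding set_prod_def s1
    using module.span_eq_iff[OF VS] module.subspace_single_0[OF VS] by simp
  have s3: "{m a b | a b. a \<in> {0} \<and> b \<in> I} = {0}" using P0[OF I] zl by (auto intro!: exI[of _ 0])
  have "set_prod sc m (set_prod sc m I I) I = {0}" unfolding s2 unfolding set_prod_def s3
    using module.span_eq_iff[OF VS] module.subspace_single_0[OF VS] by simp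
  thus ?thesis using a by blast
qed

end
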